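(* For integers $j,k,l>1$ let $G_{j,k,l}$ be the group with presentation $\langle x,y,z \mid x^j=e,\ y^k=e,\ xy=z^l\rangle$. Then $G_{j,k,l}$ is solvable if and only if $j=k=l=2$. Moreover $G_{2,2,2}$ is polycyclic. *)

theory Defs
  imports "HOL-Algebra.Algebra"
begin

text \<open>A letter is a generator together with a flag: False = the generator, True = its inverse.\<close>
type_synonym 'g letter = "'g \<times> bool"

definition inv_letter :: "'g letter \<Rightarrow> 'g letter" where
  "inv_letter a = (fst a, \<not> snd a)"

inductive pres_eq :: "'g letter list set \<Rightarrow> 'g letter list \<Rightarrow> 'g letter list \<Rightarrow> bool"
  for R where
    refl: "pres_eq R w w"
  | sym: "pres_eq R v w \<Longrightarrow> pres_eq R w v"
  | trans: "pres_eq R u v \<Longrightarrow> pres_eq R v w \<Longrightarrow> pres_eq R u w"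
  | cancel: "pres_eq R (u @ [a, inv_letter a] @ v) (u @ v)"
  | relator: "r \<in> R \<Longrightarrow> pres_eq R (u @ r @ v) (u @ v)"

definition pres_class :: "'g letter list set \<Rightarrow> 'g letter list \<Rightarrow> 'g letter list set" where
  "pres_class R w = {v. pres_eq R w v}"

definition presented_group :: "'g letter list set \<Rightarrow> 'g letter list set monoid" where
  "presented_group R =
     \<lparr> carrier = range (pres_class R),
       monoid.mult = (\<lambda>A B. {w. \<exists>a\<in>A. \<exists>b\<in>B. pres_eq R (a @ b) w}),
       one = pres_class R [] \<rparr>"

datatype gen = GX | GY | GZ

definition G_rels :: "nat \<Rightarrow> nat \<Rightarrow> nat \<Rightarrow> gen letter list set" where
  "G_rels j k l =
     { replicate j (GX, False),
       replicate k (GY, False),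
       [(GX, False), (GY, False)] @ replicate l (GZ, True) }"

definition G_jkl :: "nat \<Rightarrow> nat \<Rightarrow> nat \<Rightarrow> gen letter list set monoid" where
  "G_jkl j k l = presented_group (G_rels j k l)"

inductive polycyclic_seq :: "('a, 'b) monoid_scheme \<Rightarrow> 'a set \<Rightarrow> bool"
  for G where
    unity: "polycyclic_seq G { \<one>\<^bsub>G\<^esub> }"
  | extension: "\<lbrakk> polycyclic_seq G K; K \<lhd> (G \<lparr> carrier := H \<rparr>); subgroup H G;
                  cyclic_group ((G \<lparr> carrier := H \<rparr>) Mod K) \<rbrakk> \<Longrightarrow> polycyclic_seq G H"

definition polycyclic :: "('a, 'b) monoid_scheme \<Rightarrow> bool"
  where "polycyclic G \<longleftrightarrow> polycyclic_seq G (carrier G)"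

end

theory Submission
  imports Defs
begin

definition invw :: "'g letter list \<Rightarrow> 'g letter list" where
  "invw w = rev (map inv_letter w)"

lemma inv_letter_inv[simp]: "inv_letter (inv_letter a) = a"
  by (simp add: inv_letter_def)

lemma invw_simps[simp]: "invw [] = []" "invw (a # w) = invw w @ [inv_letter a]"
  "invw (v @ w) = invw w @ invw v" "invw (invw w) = w"
  by (auto simp: invw_def rev_map comp_def)

lemma pres_eq_ctx: "pres_eq R v w \<Longrightarrow> pres_eq R (a @ v @ b) (a @ w @ b)"
proof (induction rule: pres_eq.induct)
  case (refl w) then show ?case by (rule pres_eq.refl)
next
  case (sym v w) show ?case using sym.IH by (rule pres_eq.sym)
next
  case (trans u v w) show ?case using trans.IH by (rule pres_eq.trans)
next
  case (cancel u x v)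
  show ?case using pres_eq.cancel[of R "a @ u" x "v @ b"] by simp
next
  case (relator r u v)
  show ?case using pres_eq.relator[OF relator, of "a @ u" "v @ b"] by simp
qed

lemma pres_eq_app: "pres_eq R v v' \<Longrightarrow> pres_eq R w w' \<Longrightarrow> pres_eq R (v @ w) (v' @ w')"
proof -
  assume a: "pres_eq R v v'" and b: "pres_eq R w w'"
  have "pres_eq R (v @ w) (v' @ w)" using pres_eq_ctx[OF a, of "[]" w] by simp
  moreover have "pres_eq R (v' @ w) (v' @ w')" using pres_eq_ctx[OF b, of v' "[]"] by simp
  ultimately show ?thesis by (rule pres_eq.trans)
qed

lemma pres_eq_invw_right: "pres_eq R (w @ invw w) []"
proof (induction w)
  case Nil then show ?case by (simp add: pres_eq.refl)
next
  case (Cons a w)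
  have "pres_eq R ((a # w) @ invw (a # w)) ([a] @ (w @ invw w) @ [inv_letter a])" by (simp add: pres_eq.refl)
  moreover have "pres_eq R ([a] @ (w @ invw w) @ [inv_letter a]) ([a] @ [] @ [inv_letter a])"
    by (rule pres_eq_ctx[OF Cons])
  moreover have "pres_eq R ([] @ [a, inv_letter a] @ []) ([] @ [])" by (rule pres_eq.cancel)
  ultimately show ?case by (auto intro: pres_eq.trans)
qed

lemma pres_eq_invw_left: "pres_eq R (invw w @ w) []"
  using pres_eq_invw_right[of R "invw w"] by simp

lemma pres_class_eq_iff: "pres_class R v = pres_class R w \<longleftrightarrow> pres_eq R v w"
  unfolding pres_class_def
  by (auto intro: pres_eq.refl pres_eq.sym pres_eq.trans)

lemma pres_class_mult:
  "pres_class R v \<otimes>\<^bsub>presented_group R\<^esub> pres_class R w = pres_class R (v @ w)"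
  unfolding presented_group_def pres_class_def
  by (auto intro: pres_eq.trans pres_eq_app pres_eq.refl pres_eq.sym)

lemma presented_group_carrier: "carrier (presented_group R) = range (pres_class R)"
  by (simp add: presented_group_def)

lemma presented_group_one: "\<one>\<^bsub>presented_group R\<^esub> = pres_class R []"
  by (simp add: presented_group_def)

lemma presented_group_is_group: "group (presented_group R)"
proof (rule groupI)
  fix x y assume "x \<in> carrier (presented_group R)" "y \<in> carrier (presented_group R)"
  then show "x \<otimes>\<^bsub>presented_group R\<^esub> y \<in> carrier (presented_group R)"
    by (auto simp: presented_group_carrier pres_class_mult)
next
  show "\<one>\<^bsub>presented_group R\<^esub> \<in> carrier (presented_group R)"
    by (simp add: presented_group_carrier presented_group_one)
next
  fix x y z assume "x \<in> carrier (presented_group R)" "y \<in> carrier (presented_group R)" "z \<in> carrier (presented_group R)"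
  then show "x \<otimes>\<^bsub>presented_group R\<^esub> y \<otimes>\<^bsub>presented_group R\<^esub> z = x \<otimes>\<^bsub>presented_group R\<^esub> (y \<otimes>\<^bsub>presented_group R\<^esub> z)"
    by (auto simp: presented_group_carrier pres_class_mult)
next
  fix x assume "x \<in> carrier (presented_group R)"
  then show "\<one>\<^bsub>presented_group R\<^esub> \<otimes>\<^bsub>presented_group R\<^esub> x = x"
    by (auto simp: presented_group_carrier pres_class_mult presented_group_one)
next
  fix x assume "x \<in> carrier (presented_group R)"
  then obtain w where w: "x = pres_class R w" by (auto simp: presented_group_carrier)
  show "\<exists>y\<in>carrier (presented_group R). y \<otimes>\<^bsub>presented_group R\<^esub> x = \<one>\<^bsub>presented_group R\<^esub>"
    by (rule bexI[of _ "pres_class R (invw w)"])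
       (auto simp: w presented_group_carrier pres_class_mult presented_group_one pres_class_eq_iff pres_eq_invw_left)
qed

lemma presented_group_inv: "inv\<^bsub>presented_group R\<^esub> (pres_class R w) = pres_class R (invw w)"
proof -
  interpret group "presented_group R" by (rule presented_group_is_group)
  show ?thesis
    by (rule inv_equality) (auto simp: presented_group_carrier pres_class_mult presented_group_one
        pres_class_eq_iff pres_eq_invw_left)
qed



definition evalw :: "('g letter \<Rightarrow> 'a \<Rightarrow> 'a) \<Rightarrow> 'g letter list \<Rightarrow> 'a \<Rightarrow> 'a" where
  "evalw f w = foldr (\<lambda>a g. f a \<circ> g) w id"

lemma evalw_simps[simp]: "evalw f [] = id" "evalw f (a # w) = f a \<circ> evalw f w"
  "evalw f (v @ w) = evalw f v \<circ> evalw f w"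
  by (induction v) (auto simp: evalw_def)

definition conjw :: "'g letter list \<Rightarrow> 'g letter list \<Rightarrow> 'g letter list" where
  "conjw u t = u @ t @ invw u"
definition commw :: "'g letter list \<Rightarrow> 'g letter list \<Rightarrow> 'g letter list" where
  "commw a b = a @ b @ invw a @ invw b"

definition inv_ok :: "('g letter \<Rightarrow> 'a \<Rightarrow> 'a) \<Rightarrow> bool" where
  "inv_ok f \<longleftrightarrow> (\<forall>a. f a \<circ> f (inv_letter a) = id)"

lemma inv_okD: "inv_ok f \<Longrightarrow> f a \<circ> f (inv_letter a) = id"
  unfolding inv_ok_def by blast

lemma evalw_invw_right: "inv_ok f \<Longrightarrow> evalw f w \<circ> evalw f (invw w) = id"
proof (induction w)
  case Nil then show ?case by simp
next
  case (Cons a w)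
  have "evalw f (a # w) \<circ> evalw f (invw (a # w)) = f a \<circ> (evalw f w \<circ> evalw f (invw w)) \<circ> f (inv_letter a)"
    by (simp add: o_assoc)
  also have "\<dots> = id" using Cons.IH[OF Cons.prems] inv_okD[OF Cons.prems, of a] by (simp only: comp_id)
  finally show ?case .
qed

lemma evalw_invw_left: "inv_ok f \<Longrightarrow> evalw f (invw w) \<circ> evalw f w = id"
  using evalw_invw_right[of f "invw w"] by simp

lemma evalw_cancel:
  assumes "inv_ok f"
  shows "evalw f (invw w) \<circ> (evalw f w \<circ> g) = g" "evalw f w \<circ> (evalw f (invw w) \<circ> g) = g"
  using evalw_invw_left[OF assms, of w] evalw_invw_right[OF assms, of w]
  by (metis comp_assoc id_comp)+

lemma evalw_invw_cong:
  assumes "inv_ok f" "evalw f v = evalw f w"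
  shows "evalw f (invw v) = evalw f (invw w)"
proof -
  have "evalw f (invw v) = evalw f (invw v) \<circ> (evalw f w \<circ> evalw f (invw w))"
    using evalw_invw_right[OF assms(1), of w] by simp
  also have "\<dots> = (evalw f (invw v) \<circ> evalw f v) \<circ> evalw f (invw w)" using assms(2) by (simp add: o_assoc)
  also have "\<dots> = evalw f (invw w)" using evalw_invw_left[OF assms(1), of v] by simp
  finally show ?thesis .
qed

lemma evalw_pres_eq:
  assumes inv: "inv_ok f" and rel: "\<forall>r\<in>R. evalw f r = id"
  shows "pres_eq R v w \<Longrightarrow> evalw f v = evalw f w"
proof (induction rule: pres_eq.induct)
  case (cancel u a v)
  have "f a \<circ> f (inv_letter a) = id" using inv by (rule inv_okD)
  have "evalw f (u @ [a, inv_letter a] @ v) = evalw f u \<circ> (f a \<circ> f (inv_letter a)) \<circ> evalw f v"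
    by (simp add: comp_assoc)
  then show ?case using \<open>f a \<circ> f (inv_letter a) = id\<close> by (simp only: comp_id evalw_simps(3))
next
  case (relator r u v)
  then show ?case using rel by simp
qed auto

lemma not_solvable_crit:
  assumes inv: "inv_ok f" and rel: "\<forall>r\<in>R. evalw f r = id"
    and ne: "evalw f t \<noteq> id"
    and perf: "evalw f t = evalw f (commw (conjw u t) (conjw v t))"
  shows "\<not> solvable (presented_group R)"
proof
  let ?G = "presented_group R"
  interpret G: group ?G by (rule presented_group_is_group)
  let ?good = "\<lambda>H. \<forall>a. \<exists>w. pres_class R w \<in> H \<and> evalw f w = evalw f (conjw a t)"
  have key: "solvable_seq ?G H \<Longrightarrow> ?good H \<Longrightarrow> False" for H
  proof (induction rule: solvable_seq.induct)
    case unity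
    then obtain w where w: "pres_class R w \<in> {\<one>\<^bsub>?G\<^esub>}" "evalw f w = evalw f (conjw [] t)" by blast
    then have "pres_eq R w []" by (simp add: presented_group_one pres_class_eq_iff)
    then have "evalw f w = id" using evalw_pres_eq[OF inv rel] by fastforce
    then show False using w ne by (simp add: conjw_def)
  next
    case (extension K H)
    have "?good K"
    proof
      fix a
      obtain w1 where w1: "pres_class R w1 \<in> H" "evalw f w1 = evalw f (conjw (a @ u) t)"
        using extension.prems by blast
      obtain w2 where w2: "pres_class R w2 \<in> H" "evalw f w2 = evalw f (conjw (a @ v) t)"
        using extension.prems by blast
      have "derived ?G H \<subseteq> K"
        by (rule G.derived_of_subgroup_minimal[OF extension.hyps(2,3,4)])
      moreover have "pres_class R (commw w1 w2) \<in> derived ?G H"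
      proof -
        have "pres_class R (commw w1 w2) = pres_class R w1 \<otimes>\<^bsub>?G\<^esub> pres_class R w2 \<otimes>\<^bsub>?G\<^esub>
             inv\<^bsub>?G\<^esub> (pres_class R w1) \<otimes>\<^bsub>?G\<^esub> inv\<^bsub>?G\<^esub> (pres_class R w2)"
          by (simp add: presented_group_inv pres_class_mult commw_def)
        also have "\<dots> \<in> derived_set ?G H" using w1(1) w2(1) by blast
        finally show ?thesis unfolding derived_def by (rule generate.incl)
      qed
      ultimately have "pres_class R (commw w1 w2) \<in> K" by blast
      moreover have "evalw f (commw w1 w2) = evalw f (conjw a t)"
      proof -
        have i1: "evalw f (invw w1) = evalw f (invw (conjw (a @ u) t))"
          by (rule evalw_invw_cong[OF inv w1(2)])
        have i2: "evalw f (invw w2) = evalw f (invw (conjw (a @ v) t))"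
          by (rule evalw_invw_cong[OF inv w2(2)])
        have "evalw f (commw w1 w2) = evalw f a \<circ> evalw f (commw (conjw u t) (conjw v t)) \<circ> evalw f (invw a)"
          by (simp add: commw_def conjw_def i1 i2 w1(2) w2(2) o_assoc[symmetric] evalw_cancel[OF inv])
        also have "\<dots> = evalw f a \<circ> evalw f t \<circ> evalw f (invw a)" by (simp only: perf[symmetric])
        also have "\<dots> = evalw f (conjw a t)" by (simp add: conjw_def o_assoc)
        finally show ?thesis .
      qed
      ultimately show "\<exists>w. pres_class R w \<in> K \<and> evalw f w = evalw f (conjw a t)" by blast
    qed
    then show False by (rule extension.IH)
  qed
  assume "solvable ?G"
  then have "solvable_seq ?G (carrier ?G)" by (simp add: solvable_def)
  moreover have "?good (carrier ?G)" by (auto simp: presented_group_carrier)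
  ultimately show False by (rule key)
qed



definition cyc3 :: "'a \<Rightarrow> 'a \<Rightarrow> 'a \<Rightarrow> 'a \<Rightarrow> 'a" where
  "cyc3 a b c = (\<lambda>q. if q = a then b else if q = b then c else if q = c then a else q)"

lemma overlap_comm:
  assumes i1: "\<And>x. \<sigma> (\<sigma>' x) = x" and i2: "\<And>x. \<sigma>' (\<sigma> x) = x"
    and i3: "\<And>x. \<tau> (\<tau>' x) = x" and i4: "\<And>x. \<tau>' (\<tau> x) = x"
    and ov: "\<And>q. \<sigma> q \<noteq> q \<and> \<tau> q \<noteq> q \<longleftrightarrow> q = p"
  shows "\<sigma> (\<tau> (\<sigma>' (\<tau>' q))) = cyc3 p (\<sigma> p) (\<tau> p) q"
proof -
  have sp: "\<sigma> p \<noteq> p" and tp: "\<tau> p \<noteq> p" using ov by auto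
  have s': "\<sigma>' x = x \<longleftrightarrow> \<sigma> x = x" for x using i1 i2 by metis
  have t': "\<tau>' x = x \<longleftrightarrow> \<tau> x = x" for x using i3 i4 by metis
  have d: "\<sigma> p \<noteq> \<tau> p"
  proof
    assume e: "\<sigma> p = \<tau> p"
    have "\<sigma> (\<sigma> p) \<noteq> \<sigma> p" using sp i2 by metis
    moreover have "\<tau> (\<tau> p) \<noteq> \<tau> p" using tp i4 by metis
    ultimately have "\<sigma> p = p" using ov[of "\<sigma> p"] e by auto
    then show False using sp by simp
  qed
  consider "q = p" | "q = \<sigma> p" | "q = \<tau> p" | "q \<noteq> p" "q \<noteq> \<sigma> p" "q \<noteq> \<tau> p" by blast
  then show ?thesis
  proof cases
    case 1
    have a: "\<tau>' p \<noteq> p" using tp t' by metis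
    have "\<tau> (\<tau>' p) \<noteq> \<tau>' p" using a i3 by metis
    then have "\<sigma> (\<tau>' p) = \<tau>' p" using ov[of "\<tau>' p"] a by auto
    then have "\<sigma>' (\<tau>' p) = \<tau>' p" using s' by metis
    then show ?thesis using 1 i3 by (simp add: cyc3_def)
  next
    case 2
    have a: "\<sigma> q \<noteq> q" using 2 sp i2 by metis
    have "q \<noteq> p" using 2 sp by simp
    then have "\<tau> q = q" using ov[of q] a by auto
    then have b: "\<tau>' q = q" using t' by metis
    have c: "\<sigma>' q = p" using 2 i2 by simp
    have e: "\<tau> (\<tau> p) \<noteq> \<tau> p" using tp i4 by metis
    have "\<sigma> (\<tau> p) = \<tau> p" using ov[of "\<tau> p"] e tp by auto
    then show ?thesis using 2 b c sp d by (simp add: cyc3_def)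
  next
    case 3
    have b: "\<tau>' q = p" using 3 i4 by simp
    have a: "\<sigma>' p \<noteq> p" using sp s' by metis
    have "\<sigma> (\<sigma>' p) \<noteq> \<sigma>' p" using a i1 by metis
    then have "\<tau> (\<sigma>' p) = \<sigma>' p" using ov[of "\<sigma>' p"] a by auto
    then show ?thesis using 3 b i1 tp d by (simp add: cyc3_def)
  next
    case 4
    have r: "\<sigma> (\<tau> (\<sigma>' (\<tau>' q))) = q"
    proof (cases "\<tau> q = q")
      case True
      then have tq: "\<tau>' q = q" using t' by metis
      show ?thesis
      proof (cases "\<sigma> q = q")
        case True
        then have "\<sigma>' q = q" using s' by metis
        then show ?thesis using tq True \<open>\<tau> q = q\<close> by simp
      next
        case False
        have a: "\<sigma>' q \<noteq> p" using 4 i1 by metis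
        have "\<sigma> (\<sigma>' q) \<noteq> \<sigma>' q" using False i1 by metis
        then have "\<tau> (\<sigma>' q) = \<sigma>' q" using ov[of "\<sigma>' q"] a by auto
        then show ?thesis using tq i1 by simp
      qed
    next
      case False
      have a: "\<tau>' q \<noteq> p" using 4 i3 by metis
      have "\<tau> (\<tau>' q) \<noteq> \<tau>' q" using False i3 by metis
      then have "\<sigma> (\<tau>' q) = \<tau>' q" using ov[of "\<tau>' q"] a by auto
      then have "\<sigma>' (\<tau>' q) = \<tau>' q" using s' by metis
      moreover have "\<sigma> q = q" using ov[of q] False 4 by auto
      ultimately show ?thesis using i3 by simp
    qed
    then show ?thesis using 4 by (simp add: cyc3_def)
  qed
qed

lemma conj_cyc3:
  assumes "\<And>x. u (u' x) = x" "\<And>x. u' (u x) = x"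
  shows "u (cyc3 a b c (u' q)) = cyc3 (u a) (u b) (u c) q"
  using assms unfolding cyc3_def by (smt (verit))

lemma cyc3_inv:
  assumes "a \<noteq> b" "b \<noteq> c" "a \<noteq> c"
  shows "cyc3 a b c (cyc3 c b a x) = x" "cyc3 c b a (cyc3 a b c x) = x"
  using assms unfolding cyc3_def by auto

lemma cyc3_supp:
  assumes "a \<noteq> b" "b \<noteq> c" "a \<noteq> c"
  shows "cyc3 a b c q \<noteq> q \<longleftrightarrow> q = a \<or> q = b \<or> q = c"
  using assms unfolding cyc3_def by auto

lemma cyc3_rot:
  assumes "a \<noteq> b" "b \<noteq> c" "a \<noteq> c"
  shows "cyc3 b c a = cyc3 a b c"
  using assms unfolding cyc3_def by auto



lemma inv_unique:
  assumes "\<And>x. e (e' x) = x" "\<And>x. e' (e x) = x" "\<And>x. e (c x) = x"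
  shows "e' = c"
proof
  fix x show "e' x = c x" using assms by metis
qed

lemma evalw_inv_pt:
  assumes "inv_ok f"
  shows "evalw f w (evalw f (invw w) x) = x" "evalw f (invw w) (evalw f w x) = x"
  using evalw_invw_right[OF assms, of w] evalw_invw_left[OF assms, of w]
  by (metis comp_apply id_apply)+

lemma conj_eval:
  assumes inv: "inv_ok f" and T: "evalw f t = cyc3 p1 p2 p3"
  shows "evalw f (conjw u t) = cyc3 (evalw f u p1) (evalw f u p2) (evalw f u p3)"
proof
  fix q
  show "evalw f (conjw u t) q = cyc3 (evalw f u p1) (evalw f u p2) (evalw f u p3) q"
    using conj_cyc3[of "evalw f u" "evalw f (invw u)", OF evalw_inv_pt(1)[OF inv] evalw_inv_pt(2)[OF inv]]
    by (simp add: conjw_def T)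
qed

lemma perfect_from_cycles:
  assumes inv: "inv_ok f" and T: "evalw f t = cyc3 p1 p2 p3"
    and dp: "p1 \<noteq> p2" "p2 \<noteq> p3" "p1 \<noteq> p3"
    and U: "evalw f u p1 = a1" "evalw f u p2 = b1" "evalw f u p3 = c1"
    and V: "evalw f v p1 = a2" "evalw f v p2 = b2" "evalw f v p3 = c2"
    and d1: "a1 \<noteq> b1" "b1 \<noteq> c1" "a1 \<noteq> c1"
    and d2: "a2 \<noteq> b2" "b2 \<noteq> c2" "a2 \<noteq> c2"
    and ov: "\<And>q. (q = a1 \<or> q = b1 \<or> q = c1) \<and> (q = a2 \<or> q = b2 \<or> q = c2) \<longleftrightarrow> q = p"
    and res: "cyc3 p (cyc3 a1 b1 c1 p) (cyc3 a2 b2 c2 p) = cyc3 p1 p2 p3"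
  shows "evalw f t = evalw f (commw (conjw u t) (conjw v t))" "evalw f t \<noteq> id"
proof -
  have A: "evalw f (conjw u t) = cyc3 a1 b1 c1" using conj_eval[OF inv T, of u] U by simp
  have B: "evalw f (conjw v t) = cyc3 a2 b2 c2" using conj_eval[OF inv T, of v] V by simp
  have A': "evalw f (invw (conjw u t)) = cyc3 c1 b1 a1"
    using evalw_inv_pt(1)[OF inv, of "conjw u t"] evalw_inv_pt(2)[OF inv, of "conjw u t"]
    by (intro inv_unique[of "cyc3 a1 b1 c1"]) (auto simp: A cyc3_inv[OF d1])
  have B': "evalw f (invw (conjw v t)) = cyc3 c2 b2 a2"
    using evalw_inv_pt(1)[OF inv, of "conjw v t"] evalw_inv_pt(2)[OF inv, of "conjw v t"]
    by (intro inv_unique[of "cyc3 a2 b2 c2"]) (auto simp: B cyc3_inv[OF d2])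
  show "evalw f t = evalw f (commw (conjw u t) (conjw v t))"
  proof
    fix q
    have "evalw f (commw (conjw u t) (conjw v t)) q = cyc3 a1 b1 c1 (cyc3 a2 b2 c2 (cyc3 c1 b1 a1 (cyc3 c2 b2 a2 q)))"
      by (simp add: commw_def A B A' B')
    also have "\<dots> = cyc3 p (cyc3 a1 b1 c1 p) (cyc3 a2 b2 c2 p) q"
      by (rule overlap_comm) (auto simp: cyc3_inv[OF d1] cyc3_inv[OF d2] cyc3_supp[OF d1] cyc3_supp[OF d2] ov)
    finally show "evalw f t q = evalw f (commw (conjw u t) (conjw v t)) q" by (simp add: res T)
  qed
  show "evalw f t \<noteq> id"
  proof
    assume "evalw f t = id"
    then have "cyc3 p1 p2 p3 p1 = p1" using T by (metis id_apply)
    then show False using dp by (simp add: cyc3_def)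
  qed
qed



lemma evalw_replicate: "evalw f (replicate n a) = f a ^^ n"
  by (induction n) (auto simp: funpow_Suc_right)

lemma funpow_inv_id:
  fixes g g' :: "'a \<Rightarrow> 'a"
  assumes "\<And>x. g (g' x) = x"
  shows "(g ^^ n) ((g' ^^ n) x) = x"
proof (induction n arbitrary: x)
  case (Suc n)
  have "(g ^^ Suc n) ((g' ^^ Suc n) x) = (g ^^ n) (g (g' ((g' ^^ n) x)))"
    by (metis comp_apply funpow.simps(2) funpow_Suc_right)
  also have "\<dots> = x" using assms Suc by simp
  finally show ?case .
qed simp

definition wzf :: "nat \<Rightarrow> (nat \<Rightarrow> nat) \<Rightarrow> nat \<times> nat \<Rightarrow> nat \<times> nat" where
  "wzf l C = (\<lambda>(c,i). if Suc i < l then (c, Suc i) else if Suc i = l then (C c, 0) else (c,i))"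
definition wzf' :: "nat \<Rightarrow> (nat \<Rightarrow> nat) \<Rightarrow> nat \<times> nat \<Rightarrow> nat \<times> nat" where
  "wzf' l C' = (\<lambda>(c,i). if 0 < i \<and> i < l then (c, i - 1) else if i = 0 \<and> 0 < l then (C' c, l - 1) else (c,i))"

definition lift :: "nat \<Rightarrow> (nat \<Rightarrow> nat) \<Rightarrow> nat \<times> nat \<Rightarrow> nat \<times> nat" where
  "lift l f = (\<lambda>(c,i). if i < l then (f c, i) else (c, i))"

definition fW :: "(nat\<Rightarrow>nat) \<Rightarrow> (nat\<Rightarrow>nat) \<Rightarrow> (nat\<Rightarrow>nat) \<Rightarrow> (nat\<Rightarrow>nat) \<Rightarrow> nat \<Rightarrow> gen letter \<Rightarrow> nat \<times> nat \<Rightarrow> nat \<times> nat" where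
  "fW x x' y y' l a = (case a of (GX, b) \<Rightarrow> if b then lift l x' else lift l x
      | (GY, b) \<Rightarrow> if b then lift l y' else lift l y
      | (GZ, b) \<Rightarrow> if b then wzf' l (y' \<circ> x') else wzf l (x \<circ> y))"

definition fM :: "(nat\<Rightarrow>nat) \<Rightarrow> (nat\<Rightarrow>nat) \<Rightarrow> (nat\<Rightarrow>nat) \<Rightarrow> (nat\<Rightarrow>nat) \<Rightarrow> gen letter \<Rightarrow> nat \<Rightarrow> nat" where
  "fM x x' y y' a = (case a of (GX, b) \<Rightarrow> if b then x' else x
      | (GY, b) \<Rightarrow> if b then y' else y
      | (GZ, b) \<Rightarrow> id)"

lemma wzf_pow_small: "i + n < l \<Longrightarrow> (wzf l C ^^ n) (c, i) = (c, i + n)"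
  by (induction n) (auto simp: wzf_def)

lemma wzf_pow_l:
  assumes "i < l"
  shows "(wzf l C ^^ l) (c, i) = (C c, i)"
proof -
  have l: "l = i + Suc (l - 1 - i)" using assms by simp
  have "(wzf l C ^^ l) (c, i) = (wzf l C ^^ i) (wzf l C ((wzf l C ^^ (l - 1 - i)) (c, i)))"
    by (subst l, simp only: funpow_add funpow.simps(2) comp_apply)
  also have "(wzf l C ^^ (l - 1 - i)) (c, i) = (c, l - 1)" using wzf_pow_small[of i "l - 1 - i" l C c] assms by simp
  also have "wzf l C (c, l - 1) = (C c, 0)" using assms by (simp add: wzf_def)
  also have "(wzf l C ^^ i) (C c, 0) = (C c, i)" using wzf_pow_small[of 0 i l C] assms by simp
  finally show ?thesis .
qed

lemma wzf_pow_big: "l \<le> i \<Longrightarrow> (wzf l C ^^ n) (c, i) = (c, i)"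
  by (induction n) (auto simp: wzf_def)

lemma lift_pow: "(lift l f ^^ n) p = lift l (f ^^ n) p"
  by (induction n arbitrary: p) (auto simp: lift_def split: prod.splits)

lemma evalw_zfree:
  assumes "\<forall>a\<in>set w. fst a \<noteq> GZ"
  shows "evalw (fW x x' y y' l) w p = lift l (evalw (fM x x' y y') w) p"
  using assms
proof (induction w arbitrary: p)
  case Nil then show ?case by (auto simp: lift_def split: prod.splits)
next
  case (Cons a w)
  obtain g b where a: "a = (g, b)" by (cases a)
  have "g \<noteq> GZ" using Cons.prems a by auto
  then show ?case using Cons a
    by (cases g; cases b) (auto simp: fW_def fM_def lift_def split: prod.splits)
qed

lemma wreath_nonsolvable:
  assumes x1: "\<And>q. x (x' q) = q" and x2: "\<And>q. x' (x q) = q"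
    and y1: "\<And>q. y (y' q) = q" and y2: "\<And>q. y' (y q) = q"
    and xj: "x ^^ j = id" and yk: "y ^^ k = id" and l: "0 < l"
    and zf: "\<forall>a\<in>set t \<union> set u \<union> set v. fst a \<noteq> GZ"
    and ne: "evalw (fM x x' y y') t \<noteq> id"
    and perf: "evalw (fM x x' y y') t = evalw (fM x x' y y') (commw (conjw u t) (conjw v t))"
  shows "\<not> solvable (G_jkl j k l)"
proof -
  let ?f = "fW x x' y y' l" and ?g = "fM x x' y y'"
  have wz1: "wzf l (x \<circ> y) (wzf' l (y' \<circ> x') p) = p" for p
    using l by (cases p) (auto simp: wzf_def wzf'_def x1 y1)
  have wz2: "wzf' l (y' \<circ> x') (wzf l (x \<circ> y) p) = p" for p
    using l by (cases p) (auto simp: wzf_def wzf'_def x2 y2)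
  have inv: "inv_ok ?f"
    unfolding inv_ok_def
  proof
    fix a :: "gen letter"
    obtain g b where a: "a = (g, b)" by (cases a)
    show "?f a \<circ> ?f (inv_letter a) = id"
      by (cases g; cases b) (auto simp: a fW_def inv_letter_def fun_eq_iff x1 x2 y1 y2 wz1 wz2 lift_def)
  qed
  have zl: "(wzf l (x \<circ> y) ^^ l) p = lift l x (lift l y p)" for p
  proof (cases p)
    case (Pair c i)
    show ?thesis
    proof (cases "i < l")
      case True then show ?thesis using Pair wzf_pow_l[OF True, of "x \<circ> y" c] by (simp add: lift_def)
    next
      case False
      then show ?thesis using Pair wzf_pow_big[where l=l and i=i and C="x \<circ> y" and n=l and c=c] by (simp add: lift_def)
    qed
  qed
  have rel: "\<forall>r\<in>G_rels j k l. evalw ?f r = id"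
  proof -
    have "evalw ?f (replicate j (GX, False)) = id"
      by (simp add: evalw_replicate fW_def fun_eq_iff lift_pow xj) (simp add: lift_def split: prod.splits)
    moreover have "evalw ?f (replicate k (GY, False)) = id"
      by (simp add: evalw_replicate fW_def fun_eq_iff lift_pow yk) (simp add: lift_def split: prod.splits)
    moreover have "evalw ?f ([(GX, False), (GY, False)] @ replicate l (GZ, True)) = id"
    proof
      fix p
      have "evalw ?f ([(GX, False), (GY, False)] @ replicate l (GZ, True)) p
          = lift l x (lift l y ((wzf' l (y' \<circ> x') ^^ l) p))"
        by (simp add: evalw_replicate fW_def)
      also have "\<dots> = (wzf l (x \<circ> y) ^^ l) ((wzf' l (y' \<circ> x') ^^ l) p)" by (simp add: zl)
      also have "\<dots> = p" by (rule funpow_inv_id[where g="wzf l (x \<circ> y)" and g'="wzf' l (y' \<circ> x')", OF wz1])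
      finally show "evalw ?f ([(GX, False), (GY, False)] @ replicate l (GZ, True)) p = id p" by simp
    qed
    ultimately show ?thesis by (simp add: G_rels_def)
  qed
  have zfc: "\<forall>a\<in>set (commw (conjw u t) (conjw v t)). fst a \<noteq> GZ"
    using zf unfolding commw_def conjw_def invw_def inv_letter_def by force
  have ne': "evalw ?f t \<noteq> id"
  proof
    assume h: "evalw ?f t = id"
    obtain c where c: "evalw ?g t c \<noteq> c" using ne by (auto simp: fun_eq_iff)
    have "evalw ?f t (c, 0) = (evalw ?g t c, 0)" using evalw_zfree[of t x x' y y' l "(c,0)"] zf l
      by (simp add: lift_def)
    then show False using h c by simp
  qed
  have perf': "evalw ?f t = evalw ?f (commw (conjw u t) (conjw v t))"
  proof
    fix p
    show "evalw ?f t p = evalw ?f (commw (conjw u t) (conjw v t)) p"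
      using evalw_zfree[of t x x' y y' l p] evalw_zfree[OF zfc, of x x' y y' l p] zf perf by simp
  qed
  show ?thesis unfolding G_jkl_def by (rule not_solvable_crit[OF inv rel ne' perf'])
qed



definition rot :: "nat \<Rightarrow> nat \<Rightarrow> nat \<Rightarrow> nat" where
  "rot s n q = (if s \<le> q \<and> q < s + n then (if q = s + n - 1 then s else Suc q) else q)"
definition rot' :: "nat \<Rightarrow> nat \<Rightarrow> nat \<Rightarrow> nat" where
  "rot' s n q = (if s \<le> q \<and> q < s + n then (if q = s then s + n - 1 else q - 1) else q)"

lemma rot_inv: "0 < n \<Longrightarrow> rot s n (rot' s n q) = q" "0 < n \<Longrightarrow> rot' s n (rot s n q) = q"
  unfolding rot_def rot'_def by auto

lemma rot_supp: "2 \<le> n \<Longrightarrow> rot s n q \<noteq> q \<longleftrightarrow> s \<le> q \<and> q < s + n"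
  unfolding rot_def by auto

lemma rot_pow_gen: "0 < n \<Longrightarrow> (rot s n ^^ i) q = (if s \<le> q \<and> q < s + n then s + (q - s + i) mod n else q)"
proof (induction i)
  case 0 then show ?case by auto
next
  case (Suc i)
  show ?case
  proof (cases "s \<le> q \<and> q < s + n")
    case True
    define r where "r = (q - s + i) mod n"
    have r: "r < n" using Suc.prems by (simp add: r_def)
    have "(rot s n ^^ Suc i) q = rot s n (s + r)" using Suc True by (simp add: r_def)
    also have "\<dots> = (if r = n - 1 then s else s + Suc r)" using r by (auto simp: rot_def)
    also have "\<dots> = s + (q - s + Suc i) mod n"
      using r by (auto simp: r_def mod_Suc)
    finally show ?thesis using True by simp
  next
    case False
    have "(rot s n ^^ i) q = q" using Suc False by simp
    then have "(rot s n ^^ Suc i) q = rot s n q" by simp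
    moreover have "rot s n q = q" using False Suc.prems by (auto simp: rot_def)
    ultimately show ?thesis using False by auto
  qed
qed

lemma rot_pow: "0 < n \<Longrightarrow> rot s n ^^ n = id"
proof
  fix q assume n: "0 < n"
  show "(rot s n ^^ n) q = id q"
  proof (cases "s \<le> q \<and> q < s + n")
    case True
    then obtain d where d: "q = s + d" "d < n" by (metis add_diff_inverse_nat add_less_cancel_left not_le)
    then have "(q - s + n) mod n = q - s" by simp
    then show ?thesis using True n by (simp add: rot_pow_gen)
  qed (use n in \<open>auto simp add: rot_pow_gen\<close>)
qed



lemma fM_inv_ok:
  assumes "\<And>q. x (x' q) = q" "\<And>q. x' (x q) = q" "\<And>q. y (y' q) = q" "\<And>q. y' (y q) = q"
  shows "inv_ok (fM x x' y y')"
  unfolding inv_ok_def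
proof
  fix a :: "gen letter"
  obtain g b where a: "a = (g, b)" by (cases a)
  show "fM x x' y y' a \<circ> fM x x' y y' (inv_letter a) = id"
    by (cases g; cases b) (auto simp: a fM_def inv_letter_def fun_eq_iff assms)
qed

lemma famA:
  assumes j: "3 \<le> j" and k: "2 \<le> k" and jk: "3 \<le> k \<or> 4 \<le> j" and l: "0 < l"
  shows "\<not> solvable (G_jkl j k l)"
proof -
  let ?x = "rot 0 j" and ?x' = "rot' 0 j" and ?y = "rot (j-1) k" and ?y' = "rot' (j-1) k"
  let ?g = "fM ?x ?x' ?y ?y'"
  have x1: "\<And>q. ?x (?x' q) = q" and x2: "\<And>q. ?x' (?x q) = q" using j by (auto simp: rot_inv)
  have y1: "\<And>q. ?y (?y' q) = q" and y2: "\<And>q. ?y' (?y q) = q" using k by (auto simp: rot_inv)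
  have inv: "inv_ok ?g" by (rule fM_inv_ok[OF x1 x2 y1 y2])
  define t where "t = [(GX,False),(GY,False),(GX,True),(GY,True)]"
  have T: "evalw ?g t = cyc3 (j-1) 0 j"
  proof
    fix q
    have "evalw ?g t q = ?x (?y (?x' (?y' q)))" by (simp add: t_def fM_def)
    also have "\<dots> = cyc3 (j-1) (?x (j-1)) (?y (j-1)) q"
      by (rule overlap_comm[OF x1 x2 y1 y2]) (use j k in \<open>auto simp: rot_supp\<close>)
    also have "?x (j-1) = 0" using j by (simp add: rot_def)
    also have "?y (j-1) = j" using j k unfolding rot_def by auto
    finally show "evalw ?g t q = cyc3 (j-1) 0 j q" .
  qed
  define u where "u = [(GX,True),(GY,False)]"
  define v where "v = [(GX,False)]"
  have U1: "evalw ?g u (j-1) = j" using j k by (auto simp: u_def fM_def rot_def rot'_def)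
  have U2: "evalw ?g u 0 = j-1" using j k by (auto simp: u_def fM_def rot_def rot'_def)
  have V1: "evalw ?g v (j-1) = 0" using j k by (auto simp: v_def fM_def rot_def rot'_def)
  have V2: "evalw ?g v 0 = 1" using j k by (auto simp: v_def fM_def rot_def rot'_def)
  have V3: "evalw ?g v j = j" using j k by (auto simp: v_def fM_def rot_def rot'_def)
  have P: "evalw ?g t = evalw ?g (commw (conjw u t) (conjw v t)) \<and> evalw ?g t \<noteq> id"
  proof (cases "3 \<le> k")
    case True
    have U3: "evalw ?g u j = j + 1" using j True by (auto simp: u_def fM_def rot_def rot'_def)
    have dp: "j - 1 \<noteq> 0" "(0::nat) \<noteq> j" "j - 1 \<noteq> j" using j by auto
    have d1: "j \<noteq> j - 1" "j - 1 \<noteq> j + 1" "j \<noteq> j + 1" using j by auto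
    have d2: "(0::nat) \<noteq> 1" "1 \<noteq> j" "0 \<noteq> j" using j by auto
    have ov: "\<And>q. (q = j \<or> q = j - 1 \<or> q = j + 1) \<and> (q = 0 \<or> q = 1 \<or> q = j) \<longleftrightarrow> q = j"
      using j by auto
    have res: "cyc3 j (cyc3 j (j - 1) (j + 1) j) (cyc3 0 1 j j) = cyc3 (j - 1) 0 j"
      using j by (auto simp: cyc3_def fun_eq_iff)
    show ?thesis
      using perfect_from_cycles[OF inv T dp U1 U2 U3 V1 V2 V3 d1 d2 ov res] by blast
  next
    case False
    then have k2: "k = 2" using k by simp
    have j4: "4 \<le> j" using jk False by simp
    have U3: "evalw ?g u j = j - 2" using j4 k2 by (auto simp: u_def fM_def rot_def rot'_def)
    have dp: "j - 1 \<noteq> 0" "(0::nat) \<noteq> j" "j - 1 \<noteq> j" using j4 by auto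
    have d1: "j \<noteq> j - 1" "j - 1 \<noteq> j - 2" "j \<noteq> j - 2" using j4 by auto
    have d2: "(0::nat) \<noteq> 1" "1 \<noteq> j" "0 \<noteq> j" using j4 by auto
    have ov: "\<And>q. (q = j \<or> q = j - 1 \<or> q = j - 2) \<and> (q = 0 \<or> q = 1 \<or> q = j) \<longleftrightarrow> q = j"
      using j4 by auto
    have res: "cyc3 j (cyc3 j (j - 1) (j - 2) j) (cyc3 0 1 j j) = cyc3 (j - 1) 0 j"
      using j4 by (auto simp: cyc3_def fun_eq_iff)
    show ?thesis
      using perfect_from_cycles[OF inv T dp U1 U2 U3 V1 V2 V3 d1 d2 ov res] by blast
  qed
  show ?thesis
    by (rule wreath_nonsolvable[OF x1 x2 y1 y2 rot_pow rot_pow l, of t u v])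
       (use j k P in \<open>auto simp: t_def u_def v_def\<close>)
qed

lemma famB:
  assumes k: "4 \<le> k" and l: "0 < l"
  shows "\<not> solvable (G_jkl 2 k l)"
proof -
  let ?x = "rot 0 2" and ?x' = "rot' 0 2" and ?y = "rot 1 k" and ?y' = "rot' 1 k"
  let ?g = "fM ?x ?x' ?y ?y'"
  have x1: "\<And>q. ?x (?x' q) = q" and x2: "\<And>q. ?x' (?x q) = q" by (auto simp: rot_inv)
  have y1: "\<And>q. ?y (?y' q) = q" and y2: "\<And>q. ?y' (?y q) = q" using k by (auto simp: rot_inv)
  have inv: "inv_ok ?g" by (rule fM_inv_ok[OF x1 x2 y1 y2])
  define t where "t = [(GX,False),(GY,False),(GX,True),(GY,True)]"
  have T: "evalw ?g t = cyc3 1 0 2"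
  proof
    fix q
    have "evalw ?g t q = ?x (?y (?x' (?y' q)))" by (simp add: t_def fM_def)
    also have "\<dots> = cyc3 1 (?x 1) (?y 1) q"
      by (rule overlap_comm[OF x1 x2 y1 y2]) (use k in \<open>auto simp: rot_supp\<close>)
    also have "?x 1 = 0" by (simp add: rot_def)
    also have "?y 1 = 2" using k unfolding rot_def by auto
    finally show "evalw ?g t q = cyc3 1 0 2 q" .
  qed
  define u where "u = [(GY,True),(GX,False),(GY,False)]"
  define v where "v = [(GY,False)]"
  have U1: "evalw ?g u 1 = 1" using k by (auto simp: u_def fM_def rot_def rot'_def)
  have U2: "evalw ?g u 0 = k" using k by (auto simp: u_def fM_def rot_def rot'_def)
  have U3: "evalw ?g u 2 = 2" using k by (auto simp: u_def fM_def rot_def rot'_def)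
  have V1: "evalw ?g v 1 = 2" using k by (auto simp: v_def fM_def rot_def rot'_def)
  have V2: "evalw ?g v 0 = 0" using k by (auto simp: v_def fM_def rot_def rot'_def)
  have V3: "evalw ?g v 2 = 3" using k by (auto simp: v_def fM_def rot_def rot'_def)
  have dp: "(1::nat) \<noteq> 0" "(0::nat) \<noteq> 2" "(1::nat) \<noteq> 2" by auto
  have d1: "1 \<noteq> k" "k \<noteq> 2" "(1::nat) \<noteq> 2" using k by auto
  have d2: "(2::nat) \<noteq> 0" "(0::nat) \<noteq> 3" "(2::nat) \<noteq> 3" by auto
  have ov: "\<And>q. (q = 1 \<or> q = k \<or> q = 2) \<and> (q = 2 \<or> q = 0 \<or> q = 3) \<longleftrightarrow> q = 2"
    using k by auto
  have res: "cyc3 2 (cyc3 1 k 2 2) (cyc3 2 0 3 2) = cyc3 (1::nat) 0 2"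
    using k by (auto simp: cyc3_def fun_eq_iff)
  have P: "evalw ?g t = evalw ?g (commw (conjw u t) (conjw v t)) \<and> evalw ?g t \<noteq> id"
    using perfect_from_cycles[OF inv T dp U1 U2 U3 V1 V2 V3 d1 d2 ov res] by blast
  show ?thesis
    by (rule wreath_nonsolvable[OF x1 x2 y1 y2 rot_pow rot_pow l, of t u v])
       (use k P in \<open>auto simp: t_def u_def v_def\<close>)
qed



definition fD :: "(nat\<Rightarrow>nat) \<Rightarrow> (nat\<Rightarrow>nat) \<Rightarrow> (nat\<Rightarrow>nat) \<Rightarrow> gen letter \<Rightarrow> nat \<Rightarrow> nat" where
  "fD xx zz zz' a = (case a of (GX, b) \<Rightarrow> xx | (GY, b) \<Rightarrow> xx | (GZ, b) \<Rightarrow> if b then zz' else zz)"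

lemma direct_nonsolvable:
  assumes A: "\<And>q. A (A q) = q" and z1: "\<And>q. B (B' q) = q" and z2: "\<And>q. B' (B q) = q"
    and zl: "B ^^ l = id"
    and ne: "evalw (fD A B B') t \<noteq> id"
    and perf: "evalw (fD A B B') t = evalw (fD A B B') (commw (conjw u t) (conjw v t))"
  shows "\<not> solvable (G_jkl 2 2 l)"
proof -
  let ?f = "fD A B B'"
  have inv: "inv_ok ?f"
    unfolding inv_ok_def
  proof
    fix a :: "gen letter"
    obtain g b where a: "a = (g, b)" by (cases a)
    show "?f a \<circ> ?f (inv_letter a) = id"
      by (cases g; cases b) (auto simp: a fD_def inv_letter_def fun_eq_iff A z1 z2)
  qed
  have zl': "(B' ^^ l) q = q" for q
    using funpow_inv_id[of B B' l q, OF z1] zl by simp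
  have rel: "\<forall>r\<in>G_rels 2 2 l. evalw ?f r = id"
    by (auto simp: G_rels_def evalw_replicate fD_def fun_eq_iff A zl' numeral_2_eq_2)
  show ?thesis unfolding G_jkl_def by (rule not_solvable_crit[OF inv rel ne perf])
qed

definition P2 :: "nat \<Rightarrow> nat" where
  "P2 q = (if q = 0 then 1 else if q = 1 then 0 else if q = 2 then 3 else if q = 3 then 2 else q)"

lemma P2_inv: "P2 (P2 q) = q" by (simp add: P2_def)

lemma cyc3_024: "cyc3 (0::nat) 2 4 (cyc3 4 2 0 q) = q" "cyc3 (4::nat) 2 0 (cyc3 0 2 4 q) = q"
  by (auto simp: cyc3_def)

lemma nat_cases5: "(q::nat) = 0 \<or> q = 1 \<or> q = 2 \<or> q = 3 \<or> q = 4 \<or> 5 \<le> q" by auto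

lemma big_fix: "5 \<le> q \<Longrightarrow> P2 q = q" "5 \<le> q \<Longrightarrow> cyc3 0 2 4 q = q" "5 \<le> q \<Longrightarrow> cyc3 4 2 0 q = q"
  "5 \<le> q \<Longrightarrow> cyc3 0 1 4 q = q"
  by (auto simp: P2_def cyc3_def)

lemma concrete_perf:
  assumes "\<And>q. f q = P2 q" "\<And>q. g q = cyc3 0 2 4 q" "\<And>q. g' q = cyc3 4 2 0 q"
  shows "(\<lambda>q. g (f (g (f (g' (f (g' (f q)))))))) = cyc3 0 1 4"
    and "(\<lambda>q. f (g' q)) 0 = 4" "(\<lambda>q. f (g' q)) 1 = 0" "(\<lambda>q. f (g' q)) 4 = 3"
    and "g' 0 = 4" "g' 1 = 1" "g' 4 = 2"
proof -
  show "(\<lambda>q. g (f (g (f (g' (f (g' (f q)))))))) = cyc3 0 1 4"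
  proof
    fix q show "g (f (g (f (g' (f (g' (f q))))))) = cyc3 0 1 4 q"
      using nat_cases5[of q] by (elim disjE) (simp_all add: assms big_fix, simp_all add: P2_def cyc3_def)
  qed
qed (auto simp: assms P2_def cyc3_def)

lemma concrete_cycles:
  fixes h :: "gen letter \<Rightarrow> nat \<Rightarrow> nat"
  assumes inv: "inv_ok h" and T: "evalw h t = cyc3 0 1 4"
    and U: "evalw h u 0 = 4" "evalw h u 1 = 0" "evalw h u 4 = 3"
    and V: "evalw h v 0 = 4" "evalw h v 1 = 1" "evalw h v 4 = 2"
  shows "evalw h t = evalw h (commw (conjw u t) (conjw v t)) \<and> evalw h t \<noteq> id"
proof -
  have dp: "(0::nat) \<noteq> 1" "(1::nat) \<noteq> 4" "(0::nat) \<noteq> 4" by auto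
  have d1: "(4::nat) \<noteq> 0" "(0::nat) \<noteq> 3" "(4::nat) \<noteq> 3" by auto
  have d2: "(4::nat) \<noteq> 1" "(1::nat) \<noteq> 2" "(4::nat) \<noteq> 2" by auto
  have ov: "\<And>q. (q = 4 \<or> q = 0 \<or> q = 3) \<and> (q = 4 \<or> q = 1 \<or> q = 2) \<longleftrightarrow> q = (4::nat)" by auto
  have res: "cyc3 4 (cyc3 4 0 3 4) (cyc3 4 1 2 4) = cyc3 (0::nat) 1 4"
    by (auto simp: cyc3_def fun_eq_iff)
  show ?thesis using perfect_from_cycles[OF inv T dp U V d1 d2 ov res] by blast
qed

lemma case23:
  assumes l: "0 < l" shows "\<not> solvable (G_jkl 2 3 l)"
proof -
  let ?g = "fM P2 P2 (cyc3 0 2 4) (cyc3 4 2 0)"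
  have inv: "inv_ok ?g" by (rule fM_inv_ok) (auto simp: P2_inv cyc3_024)
  define t where "t = [(GY,False),(GX,False),(GY,False),(GX,False),(GY,True),(GX,True),(GY,True),(GX,True)]"
  define u where "u = [(GX,False),(GY,True)]"
  define v where "v = [(GY,True)]"
  note c = concrete_perf[of P2 "cyc3 0 2 4" "cyc3 4 2 0", OF HOL.refl HOL.refl HOL.refl]
  have T: "evalw ?g t = cyc3 0 1 4" using c(1) by (simp add: t_def fM_def comp_def)
  have P: "evalw ?g t = evalw ?g (commw (conjw u t) (conjw v t)) \<and> evalw ?g t \<noteq> id"
    by (rule concrete_cycles[OF inv T]) (use c in \<open>simp_all add: u_def v_def fM_def\<close>)
  have x2: "P2 ^^ 2 = id" by (auto simp: fun_eq_iff numeral_2_eq_2 P2_inv)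
  have y3: "cyc3 (0::nat) 2 4 ^^ 3 = id" by (auto simp: fun_eq_iff numeral_3_eq_3 cyc3_def)
  show ?thesis
    by (rule wreath_nonsolvable[OF P2_inv P2_inv cyc3_024 x2 y3 l, of t u v])
       (use P in \<open>auto simp: t_def u_def v_def\<close>)
qed

lemma case32:
  assumes l: "0 < l" shows "\<not> solvable (G_jkl 3 2 l)"
proof -
  let ?g = "fM (cyc3 0 2 4) (cyc3 4 2 0) P2 P2"
  have inv: "inv_ok ?g" by (rule fM_inv_ok) (auto simp: P2_inv cyc3_024)
  define t where "t = [(GX,False),(GY,False),(GX,False),(GY,False),(GX,True),(GY,True),(GX,True),(GY,True)]"
  define u where "u = [(GY,False),(GX,True)]"
  define v where "v = [(GX,True)]"
  note c = concrete_perf[of P2 "cyc3 0 2 4" "cyc3 4 2 0", OF HOL.refl HOL.refl HOL.refl]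
  have T: "evalw ?g t = cyc3 0 1 4" using c(1) by (simp add: t_def fM_def comp_def)
  have P: "evalw ?g t = evalw ?g (commw (conjw u t) (conjw v t)) \<and> evalw ?g t \<noteq> id"
    by (rule concrete_cycles[OF inv T]) (use c in \<open>simp_all add: u_def v_def fM_def\<close>)
  have x2: "P2 ^^ 2 = id" by (auto simp: fun_eq_iff numeral_2_eq_2 P2_inv)
  have y3: "cyc3 (0::nat) 2 4 ^^ 3 = id" by (auto simp: fun_eq_iff numeral_3_eq_3 cyc3_def)
  show ?thesis
    by (rule wreath_nonsolvable[OF cyc3_024 P2_inv P2_inv y3 x2 l, of t u v])
       (use P in \<open>auto simp: t_def u_def v_def\<close>)
qed

lemma case223: "\<not> solvable (G_jkl 2 2 3)"
proof -
  let ?g = "fD P2 (cyc3 0 2 4) (cyc3 4 2 0)"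
  have inv: "inv_ok ?g" unfolding inv_ok_def
  proof
    fix a :: "gen letter"
    obtain g b where a: "a = (g, b)" by (cases a)
    show "?g a \<circ> ?g (inv_letter a) = id"
      by (cases g; cases b) (auto simp: a fD_def inv_letter_def fun_eq_iff P2_inv cyc3_024)
  qed
  define t where "t = [(GZ,False),(GX,False),(GZ,False),(GX,False),(GZ,True),(GX,True),(GZ,True),(GX,True)]"
  define u where "u = [(GX,False),(GZ,True)]"
  define v where "v = [(GZ,True)]"
  note c = concrete_perf[of P2 "cyc3 0 2 4" "cyc3 4 2 0", OF HOL.refl HOL.refl HOL.refl]
  have T: "evalw ?g t = cyc3 0 1 4" using c(1) by (simp add: t_def fD_def comp_def)
  have P: "evalw ?g t = evalw ?g (commw (conjw u t) (conjw v t)) \<and> evalw ?g t \<noteq> id"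
    by (rule concrete_cycles[OF inv T]) (use c in \<open>simp_all add: u_def v_def fD_def\<close>)
  have y3: "cyc3 (0::nat) 2 4 ^^ 3 = id" by (auto simp: fun_eq_iff numeral_3_eq_3 cyc3_def)
  show ?thesis
    using direct_nonsolvable[OF P2_inv cyc3_024 y3] P by blast
qed



definition sw :: "nat \<Rightarrow> nat \<Rightarrow> nat" where
  "sw l q = (if q = l - 1 then l else if q = l then l - 1 else if q = l + 1 then l + 2
     else if q = l + 2 then l + 1 else q)"

lemma famC:
  assumes l: "4 \<le> l" shows "\<not> solvable (G_jkl 2 2 l)"
proof -
  let ?g = "fD (sw l) (rot 0 l) (rot' 0 l)"
  have s1: "\<And>q. sw l (sw l q) = q" using l by (auto simp: sw_def)
  have z1: "\<And>q. rot 0 l (rot' 0 l q) = q" and z2: "\<And>q. rot' 0 l (rot 0 l q) = q"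
    using l by (auto simp: rot_inv)
  have inv: "inv_ok ?g" unfolding inv_ok_def
  proof
    fix a :: "gen letter"
    obtain g b where a: "a = (g, b)" by (cases a)
    show "?g a \<circ> ?g (inv_letter a) = id"
      by (cases g; cases b) (auto simp: a fD_def inv_letter_def fun_eq_iff s1 z1 z2)
  qed
  define t where "t = [(GX,False),(GZ,False),(GX,True),(GZ,True)]"
  have T: "evalw ?g t = cyc3 (l-1) l 0"
  proof
    fix q
    have "evalw ?g t q = sw l (rot 0 l (sw l (rot' 0 l q)))" by (simp add: t_def fD_def)
    also have "\<dots> = cyc3 (l-1) (sw l (l-1)) (rot 0 l (l-1)) q"
      by (rule overlap_comm[where \<sigma>="sw l" and \<sigma>'="sw l" and \<tau>="rot 0 l" and \<tau>'="rot' 0 l", OF s1 s1 z1 z2]) (use l in \<open>auto simp: rot_supp sw_def\<close>)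
    also have "sw l (l-1) = l" by (simp add: sw_def)
    also have "rot 0 l (l-1) = 0" using l by (simp add: rot_def)
    finally show "evalw ?g t q = cyc3 (l-1) l 0 q" .
  qed
  define u where "u = [(GZ,False),(GX,False)]"
  define v where "v = [(GZ,True)]"
  have U1: "evalw ?g u (l-1) = l" using l by (auto simp: u_def fD_def rot_def sw_def)
  have U2: "evalw ?g u l = 0" using l by (auto simp: u_def fD_def rot_def sw_def)
  have U3: "evalw ?g u 0 = 1" using l by (auto simp: u_def fD_def rot_def sw_def)
  have V1: "evalw ?g v (l-1) = l-2" using l by (auto simp: v_def fD_def rot'_def)
  have V2: "evalw ?g v l = l" using l by (auto simp: v_def fD_def rot'_def)
  have V3: "evalw ?g v 0 = l-1" using l by (auto simp: v_def fD_def rot'_def)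
  have dp: "l - 1 \<noteq> l" "l \<noteq> 0" "l - 1 \<noteq> 0" using l by auto
  have d1: "l \<noteq> 0" "(0::nat) \<noteq> 1" "l \<noteq> 1" using l by auto
  have d2: "l - 2 \<noteq> l" "l \<noteq> l - 1" "l - 2 \<noteq> l - 1" using l by auto
  have ov: "\<And>q. (q = l \<or> q = 0 \<or> q = 1) \<and> (q = l - 2 \<or> q = l \<or> q = l - 1) \<longleftrightarrow> q = l"
    using l by auto
  have res: "cyc3 l (cyc3 l 0 1 l) (cyc3 (l - 2) l (l - 1) l) = cyc3 (l - 1) l 0"
    using l by (auto simp: cyc3_def fun_eq_iff)
  have P: "evalw ?g t = evalw ?g (commw (conjw u t) (conjw v t)) \<and> evalw ?g t \<noteq> id"
    using perfect_from_cycles[OF inv T dp U1 U2 U3 V1 V2 V3 d1 d2 ov res] by blast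
  show ?thesis
    using direct_nonsolvable[OF s1 z1 z2 rot_pow[of l 0]] P l by auto
qed

lemma not_solvable_cases:
  assumes "1 < j" "1 < k" "1 < l" "\<not> (j = 2 \<and> k = 2 \<and> l = 2)"
  shows "\<not> solvable (G_jkl j k l)"
proof -
  have l0: "0 < l" using assms by simp
  consider "3 \<le> j" "3 \<le> k \<or> 4 \<le> j" | "j = 3" "k = 2" | "j = 2" "4 \<le> k" | "j = 2" "k = 3"
    | "j = 2" "k = 2" "l = 3" | "j = 2" "k = 2" "4 \<le> l"
    using assms by linarith
  then show ?thesis
  proof cases
    case 1 then show ?thesis using famA[OF 1(1) _ 1(2) l0] assms by simp
  next
    case 2 then show ?thesis using case32[OF l0] by simp
  next
    case 3 then show ?thesis using famB[OF 3(2) l0] by simp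
  next
    case 4 then show ?thesis using case23[OF l0] by simp
  next
    case 5 then show ?thesis using case223 by simp
  next
    case 6 then show ?thesis using famC[OF 6(3)] by simp
  qed
qed



lemma (in group) cyclic_quot:
  assumes H: "subgroup H G" and K: "K \<lhd> G\<lparr>carrier := H\<rparr>" and g: "g \<in> H"
    and gen: "\<forall>h\<in>H. \<exists>n::int. h \<otimes> inv (g [^] n) \<in> K"
  shows "cyclic_group (G\<lparr>carrier := H\<rparr> Mod K)"
proof -
  let ?H = "G\<lparr>carrier := H\<rparr>"
  interpret HH: group ?H using subgroup_imp_group[OF H] .
  interpret NK: normal K ?H using K .
  interpret Q: group "?H Mod K" by (rule NK.factorgroup_is_group)
  have hom: "(\<lambda>a. K #>\<^bsub>?H\<^esub> a) \<in> hom ?H (?H Mod K)" by (rule NK.r_coset_hom_Mod)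
  have gQ: "K #>\<^bsub>?H\<^esub> g \<in> carrier (?H Mod K)" using hom g by (auto simp: hom_def Pi_def)
  show ?thesis unfolding Q.cyclic_group
  proof (intro bexI[OF _ gQ] equalityI subsetI)
    fix C assume "C \<in> carrier (?H Mod K)"
    then obtain h where h: "h \<in> H" "C = K #>\<^bsub>?H\<^esub> h" by (auto simp: FactGroup_def RCOSETS_def)
    obtain n :: int where n: "h \<otimes> inv (g [^] n) \<in> K" using gen h by blast
    have gn: "g [^] n \<in> H" using subgroup_int_pow_closed[OF H g] .
    have c: "g [^] n = g [^]\<^bsub>?H\<^esub> n" by (rule int_pow_consistent[OF H g])
    have "h \<otimes>\<^bsub>?H\<^esub> inv\<^bsub>?H\<^esub> (g [^] n) \<in> K" using n gn H by simp
    then have "h \<in> K #>\<^bsub>?H\<^esub> (g [^] n)"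
      by (intro subgroup.rcos_module_rev[OF NK.subgroup_axioms HH.is_group]) (use gn h in auto)
    then have "K #>\<^bsub>?H\<^esub> (g [^] n) = K #>\<^bsub>?H\<^esub> h"
      by (intro HH.repr_independence NK.subgroup_axioms) (use gn in auto)
    then have "C = K #>\<^bsub>?H\<^esub> (g [^]\<^bsub>?H\<^esub> n)" using h c by simp
    also have "\<dots> = (K #>\<^bsub>?H\<^esub> g) [^]\<^bsub>?H Mod K\<^esub> n"
      by (rule hom_int_pow[OF hom]) (use g in \<open>auto intro: HH.is_group Q.is_group\<close>)
    finally show "C \<in> range (\<lambda>n::int. (K #>\<^bsub>?H\<^esub> g) [^]\<^bsub>?H Mod K\<^esub> n)" by blast
  next
    fix C assume "C \<in> range (\<lambda>n::int. (K #>\<^bsub>?H\<^esub> g) [^]\<^bsub>?H Mod K\<^esub> n)"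
    then show "C \<in> carrier (?H Mod K)" using gQ by auto
  qed
qed

lemma (in group) polycyclic_solvable: "polycyclic_seq G H \<Longrightarrow> solvable_seq G H"
proof (induction rule: polycyclic_seq.induct)
  case unity then show ?case by (rule solvable_seq.unity)
next
  case (extension K H)
  have "group (G\<lparr>carrier := H\<rparr> Mod K)" using extension.hyps(2) by (rule normal.factorgroup_is_group)
  then have "comm_group (G\<lparr>carrier := H\<rparr> Mod K)"
    using group.cyclic_imp_abelian_group extension.hyps(4) by blast
  then show ?case using solvable_seq.extension[OF extension.IH extension.hyps(2,3)] by blast
qed

lemma (in group) conj_int_pow:
  assumes c: "c \<in> carrier G" and x: "x \<in> carrier G"
  shows "c \<otimes> x [^] (n::int) \<otimes> inv c = (c \<otimes> x \<otimes> inv c) [^] n"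
proof -
  have cc: "inv c \<otimes> (c \<otimes> z) = z" if "z \<in> carrier G" for z
    using that c by (simp add: m_assoc[symmetric])
  have hom: "(\<lambda>y. c \<otimes> y \<otimes> inv c) \<in> hom G G"
    by (rule homI) (use c in \<open>auto simp: m_assoc cc\<close>)
  show ?thesis by (rule hom_int_pow[OF hom x is_group is_group])
qed



lemma pres_eq_parity:
  assumes "\<forall>r\<in>R. even (length r)"
  shows "pres_eq R v w \<Longrightarrow> even (length v) = even (length w)"
  by (induction rule: pres_eq.induct) (use assms in auto)

abbreviation GG :: "gen letter list set monoid" where "GG \<equiv> G_jkl 2 2 2"
abbreviation cl :: "gen letter list \<Rightarrow> gen letter list set" where "cl \<equiv> pres_class (G_rels 2 2 2)"

lemma GG_group: "group GG" unfolding G_jkl_def by (rule presented_group_is_group)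
lemma GG_carrier: "carrier GG = range cl" unfolding G_jkl_def by (rule presented_group_carrier)
lemma GG_mult: "cl v \<otimes>\<^bsub>GG\<^esub> cl w = cl (v @ w)" unfolding G_jkl_def by (rule pres_class_mult)
lemma GG_one: "\<one>\<^bsub>GG\<^esub> = cl []" unfolding G_jkl_def by (rule presented_group_one)
lemma GG_inv: "inv\<^bsub>GG\<^esub> (cl w) = cl (invw w)" unfolding G_jkl_def by (rule presented_group_inv)
lemma cl_in[simp]: "cl w \<in> carrier GG" by (simp add: GG_carrier)

lemma cl_parity: "cl v = cl w \<Longrightarrow> even (length v) = even (length w)"
  by (rule pres_eq_parity[of "G_rels 2 2 2"]) (auto simp: G_rels_def pres_class_eq_iff)

definition M2 :: "gen letter list set set" where "M2 = {g. \<exists>w. g = cl w \<and> even (length w)}"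

lemma M2_iff: "cl w \<in> M2 \<longleftrightarrow> even (length w)"
  unfolding M2_def using cl_parity by blast

lemma length_invw[simp]: "length (invw w) = length w" by (simp add: invw_def)

interpretation GG: group GG by (rule GG_group)

lemma M2_subgroup: "subgroup M2 GG"
proof (rule GG.subgroupI)
  show "M2 \<subseteq> carrier GG" by (auto simp: M2_def)
  show "M2 \<noteq> {}" using M2_iff[of "[]"] by auto
next
  fix a assume "a \<in> M2" then obtain w where "a = cl w" "even (length w)" by (auto simp: M2_def)
  then show "inv\<^bsub>GG\<^esub> a \<in> M2" by (simp add: GG_inv M2_iff)
next
  fix a b assume "a \<in> M2" "b \<in> M2"
  then obtain v w where "a = cl v" "even (length v)" "b = cl w" "even (length w)" by (auto simp: M2_def)
  then show "a \<otimes>\<^bsub>GG\<^esub> b \<in> M2" by (simp add: GG_mult M2_iff)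
qed

lemma M2_normal: "M2 \<lhd> GG"
  unfolding GG.normal_inv_iff
proof (intro conjI ballI M2_subgroup)
  fix x h assume "x \<in> carrier GG" "h \<in> M2"
  then obtain v w where "x = cl v" "h = cl w" "even (length w)" by (auto simp: M2_def GG_carrier)
  then show "x \<otimes>\<^bsub>GG\<^esub> h \<otimes>\<^bsub>GG\<^esub> inv\<^bsub>GG\<^esub> x \<in> M2" by (simp add: GG_mult GG_inv M2_iff)
qed

lemma rep2: "replicate 2 a = [a, a]" by (simp add: numeral_2_eq_2)

definition lx :: "gen letter" where "lx = (GX, False)"
definition ly :: "gen letter" where "ly = (GY, False)"
definition lz :: "gen letter" where "lz = (GZ, False)"
definition lZ :: "gen letter" where "lZ = (GZ, True)"

abbreviation ex where "ex \<equiv> cl [lx]"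
abbreviation ey where "ey \<equiv> cl [ly]"
abbreviation ez where "ez \<equiv> cl [lz]"
abbreviation qq where "qq \<equiv> ez \<otimes>\<^bsub>GG\<^esub> ez"

lemma ex_sq: "ex \<otimes>\<^bsub>GG\<^esub> ex = \<one>\<^bsub>GG\<^esub>"
proof -
  have "pres_eq (G_rels 2 2 2) ([] @ replicate 2 lx @ []) ([] @ [])"
    by (rule pres_eq.relator) (simp add: G_rels_def lx_def)
  then show ?thesis by (simp add: GG_mult GG_one pres_class_eq_iff rep2)
qed

lemma ey_sq: "ey \<otimes>\<^bsub>GG\<^esub> ey = \<one>\<^bsub>GG\<^esub>"
proof -
  have "pres_eq (G_rels 2 2 2) ([] @ replicate 2 ly @ []) ([] @ [])"
    by (rule pres_eq.relator) (simp add: G_rels_def ly_def)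
  then show ?thesis by (simp add: GG_mult GG_one pres_class_eq_iff rep2)
qed

lemma exy: "ex \<otimes>\<^bsub>GG\<^esub> ey = qq"
proof -
  let ?R = "G_rels 2 2 2"
  have il: "inv_letter lZ = lz" by (simp add: inv_letter_def lZ_def lz_def)
  have s1: "pres_eq ?R [lx,ly,lZ,lZ,lz,lz] [lx,ly,lZ,lz]"
    using pres_eq.cancel[of ?R "[lx,ly,lZ]" lZ "[lz]"] il by simp
  have s2: "pres_eq ?R [lx,ly,lZ,lz] [lx,ly]"
    using pres_eq.cancel[of ?R "[lx,ly]" lZ "[]"] il by simp
  have "[lx, ly] @ replicate 2 lZ \<in> ?R" by (simp add: G_rels_def lx_def ly_def lZ_def)
  then have s3: "pres_eq ?R [lx,ly,lZ,lZ,lz,lz] [lz,lz]"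
    using pres_eq.relator[of "[lx,ly,lZ,lZ]" ?R "[]" "[lz,lz]"] by (simp add: rep2)
  have "pres_eq ?R [lx,ly] [lz,lz]"
    using pres_eq.trans[OF pres_eq.sym[OF s2] pres_eq.trans[OF pres_eq.sym[OF s1] s3]] .
  then show ?thesis by (simp add: GG_mult pres_class_eq_iff)
qed

lemma inv_ex: "inv\<^bsub>GG\<^esub> ex = ex" using ex_sq by (simp add: GG.inv_equality)
lemma inv_ey: "inv\<^bsub>GG\<^esub> ey = ey" using ey_sq by (simp add: GG.inv_equality)

lemma cl_letters: "cl [(GX, True)] = ex" "cl [(GY, True)] = ey" "cl [(GZ, True)] = inv\<^bsub>GG\<^esub> ez"
  "cl [(GX, False)] = ex" "cl [(GY, False)] = ey" "cl [(GZ, False)] = ez"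
proof -
  show "cl [(GX, True)] = ex" using GG_inv[of "[lx]"] inv_ex by (simp add: lx_def inv_letter_def)
  show "cl [(GY, True)] = ey" using GG_inv[of "[ly]"] inv_ey by (simp add: ly_def inv_letter_def)
  show "cl [(GZ, True)] = inv\<^bsub>GG\<^esub> ez" using GG_inv[of "[lz]"] by (simp add: lz_def inv_letter_def)
qed (simp_all add: lx_def ly_def lz_def)

lemma ex_c[simp]: "ex \<in> carrier GG" and ey_c[simp]: "ey \<in> carrier GG" and ez_c[simp]: "ez \<in> carrier GG"
  by simp_all

lemma inv_qq: "inv\<^bsub>GG\<^esub> qq = ey \<otimes>\<^bsub>GG\<^esub> ex"
proof -
  have "inv\<^bsub>GG\<^esub> (ex \<otimes>\<^bsub>GG\<^esub> ey) = inv\<^bsub>GG\<^esub> ey \<otimes>\<^bsub>GG\<^esub> inv\<^bsub>GG\<^esub> ex"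
    by (rule GG.inv_mult_group) simp_all
  then show ?thesis using exy inv_ex inv_ey by metis
qed

lemma conj_qq_letters:
  "ex \<otimes>\<^bsub>GG\<^esub> qq \<otimes>\<^bsub>GG\<^esub> inv\<^bsub>GG\<^esub> ex = inv\<^bsub>GG\<^esub> qq"
  "ey \<otimes>\<^bsub>GG\<^esub> qq \<otimes>\<^bsub>GG\<^esub> inv\<^bsub>GG\<^esub> ey = inv\<^bsub>GG\<^esub> qq"
  "ez \<otimes>\<^bsub>GG\<^esub> qq \<otimes>\<^bsub>GG\<^esub> inv\<^bsub>GG\<^esub> ez = qq"
  "inv\<^bsub>GG\<^esub> ez \<otimes>\<^bsub>GG\<^esub> qq \<otimes>\<^bsub>GG\<^esub> ez = qq"
proof -
  show "ex \<otimes>\<^bsub>GG\<^esub> qq \<otimes>\<^bsub>GG\<^esub> inv\<^bsub>GG\<^esub> ex = inv\<^bsub>GG\<^esub> qq"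
  proof -
    have "ex \<otimes>\<^bsub>GG\<^esub> (ex \<otimes>\<^bsub>GG\<^esub> ey) \<otimes>\<^bsub>GG\<^esub> ex = ey \<otimes>\<^bsub>GG\<^esub> ex"
      by (simp add: GG.m_assoc[symmetric] ex_sq)
    then show ?thesis by (simp add: exy inv_ex inv_qq)
  qed
  show "ey \<otimes>\<^bsub>GG\<^esub> qq \<otimes>\<^bsub>GG\<^esub> inv\<^bsub>GG\<^esub> ey = inv\<^bsub>GG\<^esub> qq"
  proof -
    have "ey \<otimes>\<^bsub>GG\<^esub> (ex \<otimes>\<^bsub>GG\<^esub> ey) \<otimes>\<^bsub>GG\<^esub> ey = ey \<otimes>\<^bsub>GG\<^esub> ex"
      by (simp add: GG.m_assoc ey_sq)
    then show ?thesis by (simp add: exy inv_ey inv_qq)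
  qed
  show "ez \<otimes>\<^bsub>GG\<^esub> qq \<otimes>\<^bsub>GG\<^esub> inv\<^bsub>GG\<^esub> ez = qq"
    by (simp add: GG.m_assoc)
  show "inv\<^bsub>GG\<^esub> ez \<otimes>\<^bsub>GG\<^esub> qq \<otimes>\<^bsub>GG\<^esub> ez = qq"
    by (simp add: GG.m_assoc[symmetric])
qed

definition N2 :: "gen letter list set set" where "N2 = range (\<lambda>n::int. qq [^]\<^bsub>GG\<^esub> n)"

lemma qq_c[simp]: "qq \<in> carrier GG" by simp

lemma N2_subgroup: "subgroup N2 GG"
proof (rule GG.subgroupI)
  show "N2 \<subseteq> carrier GG" by (auto simp: N2_def)
  show "N2 \<noteq> {}" by (simp add: N2_def)
next
  fix a assume "a \<in> N2" then obtain n where "a = qq [^]\<^bsub>GG\<^esub> (n::int)" by (auto simp: N2_def)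
  then have "inv\<^bsub>GG\<^esub> a = qq [^]\<^bsub>GG\<^esub> (- n)" by (simp add: GG.int_pow_neg)
  then show "inv\<^bsub>GG\<^esub> a \<in> N2" by (simp add: N2_def)
next
  fix a b assume "a \<in> N2" "b \<in> N2"
  then obtain m n where "a = qq [^]\<^bsub>GG\<^esub> (m::int)" "b = qq [^]\<^bsub>GG\<^esub> (n::int)" by (auto simp: N2_def)
  then have "a \<otimes>\<^bsub>GG\<^esub> b = qq [^]\<^bsub>GG\<^esub> (m + n)" by (simp add: GG.int_pow_mult)
  then show "a \<otimes>\<^bsub>GG\<^esub> b \<in> N2" by (simp add: N2_def)
qed

lemma qq_M2: "qq \<in> M2" using M2_iff[of "[lz, lz]"] by (simp add: GG_mult)

lemma N2_sub_M2: "N2 \<subseteq> M2"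
  using GG.subgroup_int_pow_closed[OF M2_subgroup qq_M2] by (auto simp: N2_def)

lemma conj_N2_letter:
  assumes "h \<in> N2"
  shows "cl [a] \<otimes>\<^bsub>GG\<^esub> h \<otimes>\<^bsub>GG\<^esub> inv\<^bsub>GG\<^esub> (cl [a]) \<in> N2"
proof -
  obtain n where h: "h = qq [^]\<^bsub>GG\<^esub> (n::int)" using assms by (auto simp: N2_def)
  have c: "cl [a] \<otimes>\<^bsub>GG\<^esub> qq \<otimes>\<^bsub>GG\<^esub> inv\<^bsub>GG\<^esub> (cl [a]) \<in> {qq, inv\<^bsub>GG\<^esub> qq}"
  proof -
    obtain g b where a: "a = (g, b)" by (cases a)
    show ?thesis by (cases g; cases b) (simp_all only: a cl_letters GG.inv_inv[OF ez_c] conj_qq_letters insert_iff, simp_all)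
  qed
  have "cl [a] \<otimes>\<^bsub>GG\<^esub> h \<otimes>\<^bsub>GG\<^esub> inv\<^bsub>GG\<^esub> (cl [a]) = (cl [a] \<otimes>\<^bsub>GG\<^esub> qq \<otimes>\<^bsub>GG\<^esub> inv\<^bsub>GG\<^esub> (cl [a])) [^]\<^bsub>GG\<^esub> n"
    unfolding h by (rule GG.conj_int_pow) simp_all
  moreover have "qq [^]\<^bsub>GG\<^esub> n \<in> N2" "(inv\<^bsub>GG\<^esub> qq) [^]\<^bsub>GG\<^esub> n \<in> N2"
    by (auto simp: N2_def GG.int_pow_inv GG.int_pow_neg[symmetric])
  ultimately show ?thesis using c by auto
qed

lemma N2_normal: "N2 \<lhd> GG"
  unfolding GG.normal_inv_iff
proof (intro conjI ballI N2_subgroup)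
  fix x h assume "x \<in> carrier GG" "h \<in> N2"
  then obtain w where x: "x = cl w" by (auto simp: GG_carrier)
  have "\<forall>h\<in>N2. cl w \<otimes>\<^bsub>GG\<^esub> h \<otimes>\<^bsub>GG\<^esub> inv\<^bsub>GG\<^esub> (cl w) \<in> N2"
  proof (induction w)
    case Nil then show ?case using subgroup.mem_carrier[OF N2_subgroup] by (simp add: GG_one[symmetric])
  next
    case (Cons a w)
    show ?case
    proof
      fix h assume h: "h \<in> N2"
      have hc: "h \<in> carrier GG" by (rule subgroup.mem_carrier[OF N2_subgroup h])
      have e: "cl (a # w) = cl [a] \<otimes>\<^bsub>GG\<^esub> cl w" by (simp add: GG_mult)
      have gen: "(A \<otimes>\<^bsub>GG\<^esub> W) \<otimes>\<^bsub>GG\<^esub> h \<otimes>\<^bsub>GG\<^esub> inv\<^bsub>GG\<^esub> (A \<otimes>\<^bsub>GG\<^esub> W)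
          = A \<otimes>\<^bsub>GG\<^esub> (W \<otimes>\<^bsub>GG\<^esub> h \<otimes>\<^bsub>GG\<^esub> inv\<^bsub>GG\<^esub> W) \<otimes>\<^bsub>GG\<^esub> inv\<^bsub>GG\<^esub> A"
        if "A \<in> carrier GG" "W \<in> carrier GG" for A W
        using that hc by (simp add: GG.inv_mult_group GG.m_assoc)
      have "cl (a # w) \<otimes>\<^bsub>GG\<^esub> h \<otimes>\<^bsub>GG\<^esub> inv\<^bsub>GG\<^esub> (cl (a # w))
          = cl [a] \<otimes>\<^bsub>GG\<^esub> (cl w \<otimes>\<^bsub>GG\<^esub> h \<otimes>\<^bsub>GG\<^esub> inv\<^bsub>GG\<^esub> (cl w)) \<otimes>\<^bsub>GG\<^esub> inv\<^bsub>GG\<^esub> (cl [a])"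
        by (subst e)+ (rule gen; simp)
      also have "\<dots> \<in> N2" by (rule conj_N2_letter[OF Cons.IH[rule_format, OF h]])
      finally show "cl (a # w) \<otimes>\<^bsub>GG\<^esub> h \<otimes>\<^bsub>GG\<^esub> inv\<^bsub>GG\<^esub> (cl (a # w)) \<in> N2" .
    qed
  qed
  then show "x \<otimes>\<^bsub>GG\<^esub> h \<otimes>\<^bsub>GG\<^esub> inv\<^bsub>GG\<^esub> x \<in> N2" using x \<open>h \<in> N2\<close> by blast
qed

declare one_FactGroup[simp del] mult_FactGroup[simp del]

abbreviation QQ where "QQ \<equiv> GG Mod N2"
abbreviation pr where "pr a \<equiv> N2 #>\<^bsub>GG\<^esub> a"

interpretation NN: normal N2 GG by (rule N2_normal)
interpretation QG: group QQ by (rule NN.factorgroup_is_group)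
interpretation PI: group_hom GG QQ pr
  by (intro group_hom.intro group_hom_axioms.intro GG_group NN.factorgroup_is_group NN.r_coset_hom_Mod)

abbreviation rr where "rr \<equiv> ex \<otimes>\<^bsub>GG\<^esub> ez"
abbreviation rho where "rho \<equiv> pr rr"
abbreviation zeta where "zeta \<equiv> pr ez"
abbreviation xi where "xi \<equiv> pr ex"

lemma qq_N2: "qq \<in> N2" unfolding N2_def using GG.int_pow_1[OF qq_c] by (metis rangeI)

lemma pr_N2: "h \<in> N2 \<Longrightarrow> pr h = \<one>\<^bsub>QQ\<^esub>"
  using GG.coset_join2[OF subgroup.mem_carrier[OF N2_subgroup] N2_subgroup] by (simp add: FactGroup_def)

lemma pr_eq_imp:
  assumes "a \<in> carrier GG" "b \<in> carrier GG" "pr a = pr b"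
  shows "a \<otimes>\<^bsub>GG\<^esub> inv\<^bsub>GG\<^esub> b \<in> N2"
proof -
  have "a \<in> pr b" using GG.rcos_self[OF assms(1) N2_subgroup] assms(3) by simp
  then show ?thesis by (rule subgroup.rcos_module_imp[OF N2_subgroup GG_group assms(2)])
qed

lemma rho_c[simp]: "rho \<in> carrier QQ" and zeta_c[simp]: "zeta \<in> carrier QQ" and xi_c[simp]: "xi \<in> carrier QQ"
  by simp_all

lemma zeta_sq: "zeta \<otimes>\<^bsub>QQ\<^esub> zeta = \<one>\<^bsub>QQ\<^esub>"
  using PI.hom_mult[of ez ez] pr_N2[OF qq_N2] by simp

lemma xi_sq: "xi \<otimes>\<^bsub>QQ\<^esub> xi = \<one>\<^bsub>QQ\<^esub>"
  using PI.hom_mult[of ex ex] ex_sq by simp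

lemma inv_zeta: "inv\<^bsub>QQ\<^esub> zeta = zeta" using zeta_sq by (simp add: QG.inv_equality)
lemma inv_xi: "inv\<^bsub>QQ\<^esub> xi = xi" using xi_sq by (simp add: QG.inv_equality)

lemma pr_ey: "pr ey = xi"
proof -
  have "ex \<otimes>\<^bsub>GG\<^esub> qq = ey"
    using exy[symmetric] by (simp add: GG.m_assoc[symmetric] ex_sq)
  then have "pr ey = xi \<otimes>\<^bsub>QQ\<^esub> pr qq" using PI.hom_mult[of ex qq] by simp
  then show ?thesis using pr_N2[OF qq_N2] by simp
qed

lemma pr_inv_ez: "pr (inv\<^bsub>GG\<^esub> ez) = zeta"
  using PI.hom_inv[of ez] inv_zeta by simp

lemma rho_eq: "rho = xi \<otimes>\<^bsub>QQ\<^esub> zeta" using PI.hom_mult[of ex ez] by simp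

lemma xi_eq: "xi = rho \<otimes>\<^bsub>QQ\<^esub> zeta"
  by (simp add: rho_eq QG.m_assoc zeta_sq)

lemma zeta_rho_conj: "zeta \<otimes>\<^bsub>QQ\<^esub> rho \<otimes>\<^bsub>QQ\<^esub> inv\<^bsub>QQ\<^esub> zeta = inv\<^bsub>QQ\<^esub> rho"
proof -
  have "inv\<^bsub>QQ\<^esub> rho = zeta \<otimes>\<^bsub>QQ\<^esub> xi"
    unfolding rho_eq by (simp add: QG.inv_mult_group inv_zeta inv_xi)
  moreover have "zeta \<otimes>\<^bsub>QQ\<^esub> (xi \<otimes>\<^bsub>QQ\<^esub> zeta) \<otimes>\<^bsub>QQ\<^esub> zeta = zeta \<otimes>\<^bsub>QQ\<^esub> xi"
    by (simp add: QG.m_assoc zeta_sq)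
  ultimately show ?thesis by (simp add: inv_zeta rho_eq)
qed

lemma zeta_rho_pow: "zeta \<otimes>\<^bsub>QQ\<^esub> (rho [^]\<^bsub>QQ\<^esub> (n::int) \<otimes>\<^bsub>QQ\<^esub> c) = rho [^]\<^bsub>QQ\<^esub> (-n) \<otimes>\<^bsub>QQ\<^esub> (zeta \<otimes>\<^bsub>QQ\<^esub> c)"
  if "c \<in> carrier QQ"
proof -
  have "zeta \<otimes>\<^bsub>QQ\<^esub> rho [^]\<^bsub>QQ\<^esub> n \<otimes>\<^bsub>QQ\<^esub> inv\<^bsub>QQ\<^esub> zeta = (inv\<^bsub>QQ\<^esub> rho) [^]\<^bsub>QQ\<^esub> n"
    using QG.conj_int_pow[of zeta rho n] zeta_rho_conj by simp
  also have "\<dots> = rho [^]\<^bsub>QQ\<^esub> (-n)" by (simp add: QG.int_pow_inv QG.int_pow_neg)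
  finally have e: "zeta \<otimes>\<^bsub>QQ\<^esub> rho [^]\<^bsub>QQ\<^esub> n \<otimes>\<^bsub>QQ\<^esub> zeta = rho [^]\<^bsub>QQ\<^esub> (-n)"
    by (simp add: inv_zeta)
  have "zeta \<otimes>\<^bsub>QQ\<^esub> (rho [^]\<^bsub>QQ\<^esub> n \<otimes>\<^bsub>QQ\<^esub> c) = (zeta \<otimes>\<^bsub>QQ\<^esub> rho [^]\<^bsub>QQ\<^esub> n \<otimes>\<^bsub>QQ\<^esub> zeta) \<otimes>\<^bsub>QQ\<^esub> (zeta \<otimes>\<^bsub>QQ\<^esub> c)"
    using that by (simp add: QG.m_assoc zeta_sq[symmetric] del: zeta_sq) (simp add: QG.m_assoc[symmetric] zeta_sq)
  then show ?thesis using e by simp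
qed

lemma Zb_c: "(if b then zeta else \<one>\<^bsub>QQ\<^esub>) \<in> carrier QQ" by simp

lemma zeta_Zb: "zeta \<otimes>\<^bsub>QQ\<^esub> (if b then zeta else \<one>\<^bsub>QQ\<^esub>) = (if \<not> b then zeta else \<one>\<^bsub>QQ\<^esub>)"
  by (simp add: zeta_sq)

lemma pr_letter: "pr (cl [a]) = zeta \<or> pr (cl [a]) = xi"
proof -
  obtain g b where a: "a = (g, b)" by (cases a)
  show ?thesis by (cases g; cases b) (simp_all add: a cl_letters pr_ey pr_inv_ez)
qed

lemma normal_form: "\<exists>n::int. \<exists>b. pr (cl w) = rho [^]\<^bsub>QQ\<^esub> n \<otimes>\<^bsub>QQ\<^esub> (if b then zeta else \<one>\<^bsub>QQ\<^esub>)"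
proof (induction w)
  case Nil
  have "pr (cl []) = \<one>\<^bsub>QQ\<^esub>" using PI.hom_one by (simp add: GG_one)
  then show ?case by (intro exI[of _ 0] exI[of _ False]) simp
next
  case (Cons a w)
  then obtain n :: int and b where nb: "pr (cl w) = rho [^]\<^bsub>QQ\<^esub> n \<otimes>\<^bsub>QQ\<^esub> (if b then zeta else \<one>\<^bsub>QQ\<^esub>)" by blast
  have hm: "pr (cl (a # w)) = pr (cl [a]) \<otimes>\<^bsub>QQ\<^esub> pr (cl w)"
    using PI.hom_mult[of "cl [a]" "cl w"] by (simp add: GG_mult)
  have z: "zeta \<otimes>\<^bsub>QQ\<^esub> pr (cl w) = rho [^]\<^bsub>QQ\<^esub> (-n) \<otimes>\<^bsub>QQ\<^esub> (if \<not> b then zeta else \<one>\<^bsub>QQ\<^esub>)"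
    unfolding nb by (simp only: zeta_rho_pow[OF Zb_c] zeta_Zb)
  show ?case
  proof (cases "pr (cl [a]) = zeta")
    case True then show ?thesis by (intro exI[of _ "-n"] exI[of _ "\<not> b"]) (simp only: hm True z)
  next
    case False
    have x: "pr (cl [a]) = rho \<otimes>\<^bsub>QQ\<^esub> zeta"
      using pr_letter[of a] False xi_eq by argo
    have pc: "pr (cl w) \<in> carrier QQ" by (rule PI.hom_closed) simp
    have "pr (cl (a # w)) = rho \<otimes>\<^bsub>QQ\<^esub> (zeta \<otimes>\<^bsub>QQ\<^esub> pr (cl w))"
      unfolding hm x by (rule QG.m_assoc[OF rho_c zeta_c pc])
    also have "\<dots> = rho [^]\<^bsub>QQ\<^esub> (1 + - n) \<otimes>\<^bsub>QQ\<^esub> (if \<not> b then zeta else \<one>\<^bsub>QQ\<^esub>)"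
      unfolding z QG.int_pow_mult[OF rho_c] by (simp add: QG.m_assoc)
    finally show ?thesis by (intro exI[of _ "1 + - n"] exI[of _ "\<not> b"])
  qed
qed

lemma rr_M2: "rr \<in> M2" using M2_iff[of "[lx, lz]"] by (simp add: GG_mult)
lemma ez_notM2: "ez \<notin> M2" using M2_iff[of "[lz]"] by simp
lemma rr_c[simp]: "rr \<in> carrier GG" by simp

lemma M2_step: "h \<in> M2 \<Longrightarrow> \<exists>n::int. h \<otimes>\<^bsub>GG\<^esub> inv\<^bsub>GG\<^esub> (rr [^]\<^bsub>GG\<^esub> n) \<in> N2"
proof -
  assume h: "h \<in> M2"
  have hc: "h \<in> carrier GG" by (rule subgroup.mem_carrier[OF M2_subgroup h])
  obtain w where w: "h = cl w" using hc by (auto simp: GG_carrier)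
  obtain n :: int and b where nb: "pr h = rho [^]\<^bsub>QQ\<^esub> n \<otimes>\<^bsub>QQ\<^esub> (if b then zeta else \<one>\<^bsub>QQ\<^esub>)"
    using normal_form[of w] w by blast
  have pw: "pr (rr [^]\<^bsub>GG\<^esub> n) = rho [^]\<^bsub>QQ\<^esub> n" by (rule PI.hom_int_pow) simp
  have rn: "rr [^]\<^bsub>GG\<^esub> n \<in> M2" by (rule GG.subgroup_int_pow_closed[OF M2_subgroup rr_M2])
  have rnc: "rr [^]\<^bsub>GG\<^esub> n \<in> carrier GG" by simp
  show ?thesis
  proof (cases b)
    case True
    let ?P = "rr [^]\<^bsub>GG\<^esub> n \<otimes>\<^bsub>GG\<^esub> ez"
    have Pc: "?P \<in> carrier GG" by simp
    have "pr h = pr ?P" using nb True PI.hom_mult[OF rnc ez_c] pw by simp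
    then have k: "h \<otimes>\<^bsub>GG\<^esub> inv\<^bsub>GG\<^esub> ?P \<in> M2"
      using pr_eq_imp[OF hc Pc] N2_sub_M2 by blast
    have "inv\<^bsub>GG\<^esub> (h \<otimes>\<^bsub>GG\<^esub> inv\<^bsub>GG\<^esub> ?P) \<otimes>\<^bsub>GG\<^esub> h = ?P"
      using hc Pc by (simp add: GG.inv_mult_group GG.m_assoc)
    then have "?P \<in> M2"
      using subgroup.m_closed[OF M2_subgroup subgroup.m_inv_closed[OF M2_subgroup k] h] by simp
    then have "inv\<^bsub>GG\<^esub> (rr [^]\<^bsub>GG\<^esub> n) \<otimes>\<^bsub>GG\<^esub> ?P \<in> M2"
      using subgroup.m_closed[OF M2_subgroup subgroup.m_inv_closed[OF M2_subgroup rn]] by blast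
    moreover have "inv\<^bsub>GG\<^esub> (rr [^]\<^bsub>GG\<^esub> n) \<otimes>\<^bsub>GG\<^esub> ?P = ez"
      by (simp add: GG.m_assoc[symmetric])
    ultimately show ?thesis using ez_notM2 by simp
  next
    case False
    then have "pr h = pr (rr [^]\<^bsub>GG\<^esub> n)" using nb pw by simp
    then show ?thesis using pr_eq_imp[OF hc rnc] by blast
  qed
qed

lemma top_step: "h \<in> carrier GG \<Longrightarrow> \<exists>n::int. h \<otimes>\<^bsub>GG\<^esub> inv\<^bsub>GG\<^esub> (ez [^]\<^bsub>GG\<^esub> n) \<in> M2"
proof -
  assume "h \<in> carrier GG"
  then obtain w where w: "h = cl w" by (auto simp: GG_carrier)
  show ?thesis
  proof (cases "even (length w)")
    case True
    then show ?thesis by (intro exI[of _ 0]) (simp add: w M2_iff)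
  next
    case False
    have "h \<otimes>\<^bsub>GG\<^esub> inv\<^bsub>GG\<^esub> (ez [^]\<^bsub>GG\<^esub> (1::int)) = cl (w @ invw [lz])"
      by (simp add: w GG_inv GG_mult)
    then show ?thesis using False by (intro exI[of _ 1]) (simp add: M2_iff)
  qed
qed

lemma GG_polycyclic: "polycyclic GG"
proof -
  have s1: "polycyclic_seq GG {\<one>\<^bsub>GG\<^esub>}" by (rule polycyclic_seq.unity)
  have n1: "{\<one>\<^bsub>GG\<^esub>} \<lhd> GG\<lparr>carrier := N2\<rparr>"
    using group.one_is_normal[OF GG.subgroup_imp_group[OF N2_subgroup]] by simp
  have g1: "\<forall>h\<in>N2. \<exists>n::int. h \<otimes>\<^bsub>GG\<^esub> inv\<^bsub>GG\<^esub> (qq [^]\<^bsub>GG\<^esub> n) \<in> {\<one>\<^bsub>GG\<^esub>}"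
    by (auto simp: N2_def) (metis GG.int_pow_closed GG.r_inv qq_c)
  have s2: "polycyclic_seq GG N2"
    by (rule polycyclic_seq.extension[OF s1 n1 N2_subgroup GG.cyclic_quot[OF N2_subgroup n1 qq_N2 g1]])
  have n2: "N2 \<lhd> GG\<lparr>carrier := M2\<rparr>"
    by (rule GG.normal_restrict_supergroup[OF M2_subgroup N2_normal N2_sub_M2])
  have s3: "polycyclic_seq GG M2"
    by (rule polycyclic_seq.extension[OF s2 n2 M2_subgroup GG.cyclic_quot[OF M2_subgroup n2 rr_M2]])
       (use M2_step in blast)
  have e: "GG\<lparr>carrier := carrier GG\<rparr> = GG" by simp
  have n3: "M2 \<lhd> GG\<lparr>carrier := carrier GG\<rparr>" using M2_normal by (simp only: e)
  have s4: "polycyclic_seq GG (carrier GG)"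
    by (rule polycyclic_seq.extension[OF s3 n3 GG.subgroup_self GG.cyclic_quot[OF GG.subgroup_self n3 ez_c]])
       (use top_step in blast)
  then show ?thesis by (simp add: polycyclic_def)
qed

lemma GG_solvable: "solvable GG"
  using GG.polycyclic_solvable GG_polycyclic by (simp add: polycyclic_def solvable_def)



theorem proposition7p2:
  fixes j k l :: nat
  assumes "j > 1" and "k > 1" and "l > 1"
  shows "(solvable (G_jkl j k l) \<longleftrightarrow> j = 2 \<and> k = 2 \<and> l = 2) \<and> polycyclic (G_jkl 2 2 2)"
proof -
  have "solvable (G_jkl j k l) \<longleftrightarrow> j = 2 \<and> k = 2 \<and> l = 2"
  proof
    assume "solvable (G_jkl j k l)"
    then show "j = 2 \<and> k = 2 \<and> l = 2" using not_solvable_cases[OF assms] by blast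
  next
    assume "j = 2 \<and> k = 2 \<and> l = 2"
    then show "solvable (G_jkl j k l)" using GG_solvable by simp
  qed
  then show ?thesis using GG_polycyclic by simp
qed

end
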